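(* Let $n\ge 3$ be odd and let $D_{2n}$ be the dihedral group of order $2n$. Every indecomposable cycle set $X$ whose permutation group $G(X)$ is isomorphic to $D_{2n}$ satisfies $|X|=2n$.
   Context: A cycle set is a set $X$ with a binary operation $\cdot$ such that for every $x\in X$ the map $\sigma(x)\colon X\to X$, $y\mapsto x\cdot y$, is bijective, and $(x\cdot y)\cdot(x\cdot z)=(y\cdot x)\cdot(y\cdot z)$ for all $x,y,z\in X$. The permutation group $G(X)$ is the subgroup of the symmetric group on $X$ generated by all $\sigma(x)$, $x\in X$. The cycle set $X$ is indecomposable if $G(X)$ acts transitively on $X$ (equivalently, $X$ is not the disjoint union of two nonempty $G(X)$-invariant subsets). *)

theory Defs
  imports "HOL-Algebra.Algebra"
begin

definition cycle_set :: "'a set \<Rightarrow> ('a \<Rightarrow> 'a \<Rightarrow> 'a) \<Rightarrow> bool" where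
  "cycle_set A mu \<longleftrightarrow>
     (\<forall>x\<in>A. \<forall>y\<in>A. mu x y \<in> A) \<and>
     (\<forall>x\<in>A. bij_betw (mu x) A A) \<and>
     (\<forall>x\<in>A. \<forall>y\<in>A. \<forall>z\<in>A. mu (mu x y) (mu x z) = mu (mu y x) (mu y z))"

definition cs_sigma :: "'a set \<Rightarrow> ('a \<Rightarrow> 'a \<Rightarrow> 'a) \<Rightarrow> 'a \<Rightarrow> ('a \<Rightarrow> 'a)" where
  "cs_sigma A mu x = (\<lambda>y\<in>A. mu x y)"

definition perm_group :: "'a set \<Rightarrow> ('a \<Rightarrow> 'a \<Rightarrow> 'a) \<Rightarrow> ('a \<Rightarrow> 'a) monoid" where
  "perm_group A mu =
     (BijGroup A)\<lparr>carrier := generate (BijGroup A) (cs_sigma A mu ` A)\<rparr>"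

definition indecomposable :: "'a set \<Rightarrow> ('a \<Rightarrow> 'a \<Rightarrow> 'a) \<Rightarrow> bool" where
  "indecomposable A mu \<longleftrightarrow>
     (\<forall>x\<in>A. \<forall>y\<in>A. \<exists>g\<in>carrier (perm_group A mu). g x = y)"

text \<open>The dihedral group of order 2n: elements r^k s^b with k in {0..<n}, b :: bool,
  multiplication (r^a s^b)(r^c s^d) = r^(a + (-1)^b c) s^(b+d).\<close>
definition dihedral_group :: "nat \<Rightarrow> (nat \<times> bool) monoid" where
  "dihedral_group n =
     \<lparr>carrier = {0..<n} \<times> UNIV,
      monoid.mult = (\<lambda>(a, b) (c, d). ((if b then a + (n - c) else a + c) mod n, b \<noteq> d)),
      one = (0, False)\<rparr>"

end

theory Submission
  imports Defs
begin


lemma dmult: "(a, b) \<otimes>\<^bsub>dihedral_group n\<^esub> (c, d) = ((if b then a + (n - c) else a + c) mod n, b \<noteq> d)"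
  by (simp add: dihedral_group_def)

lemma dcarrier: "carrier (dihedral_group n) = {0..<n} \<times> UNIV"
  by (simp add: dihedral_group_def)

lemma modeq_dvd: "(x::nat) mod n = y mod n \<Longrightarrow> int n dvd int x - int y"
  by (metis mod_eq_dvd_iff of_nat_mod)

lemma dvd_modeq: "int n dvd int x - int y \<Longrightarrow> (x::nat) mod n = y mod n"
  by (metis mod_eq_dvd_iff of_nat_mod of_nat_eq_iff)

lemma odd_dvd2: "odd n \<Longrightarrow> int n dvd 2 * z \<Longrightarrow> int n dvd z"
proof -
  assume "odd n" "int n dvd 2 * z"
  moreover have "coprime (int n) 2" using \<open>odd n\<close> by (simp add: coprime_commute)
  ultimately show ?thesis using coprime_dvd_mult_right_iff by blast
qed

lemma small_dvd: "int n dvd z \<Longrightarrow> \<bar>z\<bar> < int n \<Longrightarrow> z = 0"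
  using dvd_imp_le_int[of z "int n"] by auto

lemma D1: "a < n \<Longrightarrow> c < n \<Longrightarrow>
   (a, False) \<otimes>\<^bsub>dihedral_group n\<^esub> (c, d) = (c, d) \<otimes>\<^bsub>dihedral_group n\<^esub> (a, False) \<or>
   (a, False) \<otimes>\<^bsub>dihedral_group n\<^esub> ((c, d) \<otimes>\<^bsub>dihedral_group n\<^esub> (a, False)) = (c, d)"
proof (cases d)
  case True
  assume a: "a < n" and c: "c < n"
  have "(a + (c + (n - a)) mod n) mod n = (a + (c + (n - a))) mod n" by (simp add: mod_add_right_eq)
  also have "a + (c + (n - a)) = c + n" using a by simp
  finally have "(a + (c + (n - a)) mod n) mod n = c" using c by simp
  then show ?thesis using True by (simp add: dmult)
next
  case False then show ?thesis by (simp add: dmult add.commute)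
qed

lemma D3: "odd n \<Longrightarrow> a < n \<Longrightarrow> c < n \<Longrightarrow>
   (c, d) \<otimes>\<^bsub>dihedral_group n\<^esub> (a, True) = (a, True) \<otimes>\<^bsub>dihedral_group n\<^esub> (c, d) \<Longrightarrow>
   (c, d) = (0, False) \<or> (c, d) = (a, True)"
proof (cases d)
  case False
  assume n: "odd n" and a: "a < n" and c: "c < n" and e: "(c, d) \<otimes>\<^bsub>dihedral_group n\<^esub> (a, True) = (a, True) \<otimes>\<^bsub>dihedral_group n\<^esub> (c, d)"
  have "(c + a) mod n = (a + (n - c)) mod n" using e False by (simp add: dmult)
  then have dv: "int n dvd int (c + a) - int (a + (n - c))" by (rule modeq_dvd)
  have eq: "int (c + a) - int (a + (n - c)) = 2 * int c - int n"
  proof -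
    have e2: "int (n - c) = int n - int c" using c by simp
    show ?thesis unfolding of_nat_add e2 by (simp add: algebra_simps)
  qed
  have "int n dvd 2 * int c - int n" using dv unfolding eq .
  then have "int n dvd (2 * int c - int n) + int n" by (rule dvd_add) simp
  then have "int n dvd 2 * int c" by simp
  then have "int n dvd int c" using odd_dvd2 n by blast
  then have "c = 0" using small_dvd[of n "int c"] c by simp
  then show ?thesis using False by simp
next
  case True
  assume n: "odd n" and a: "a < n" and c: "c < n" and e: "(c, d) \<otimes>\<^bsub>dihedral_group n\<^esub> (a, True) = (a, True) \<otimes>\<^bsub>dihedral_group n\<^esub> (c, d)"
  have "(c + (n - a)) mod n = (a + (n - c)) mod n" using e True by (simp add: dmult)
  then have dv: "int n dvd int (c + (n - a)) - int (a + (n - c))" by (rule modeq_dvd)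
  have eq: "int (c + (n - a)) - int (a + (n - c)) = 2 * (int c - int a)"
  proof -
    have e1: "int (n - a) = int n - int a" using a by simp
    have e2: "int (n - c) = int n - int c" using c by simp
    show ?thesis unfolding of_nat_add e1 e2 by (simp add: algebra_simps)
  qed
  have "int n dvd 2 * (int c - int a)" using dv unfolding eq .
  then have "int n dvd int c - int a" using odd_dvd2 n by blast
  then have "int c - int a = 0" using small_dvd[of n "int c - int a"] a c by simp
  then show ?thesis using True by simp
qed

lemma D2: "odd n \<Longrightarrow> a < n \<Longrightarrow> b < n \<Longrightarrow>
   \<exists>c<n. (c, False) \<otimes>\<^bsub>dihedral_group n\<^esub> (a, True) = (b, True) \<otimes>\<^bsub>dihedral_group n\<^esub> (c, False)"
proof -
  assume n: "odd n" and a: "a < n" and b: "b < n"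
  obtain m where m: "n = 2 * m + 1" using n oddE by blast
  define e where "e = b + n - a"
  define q where "q = (e * (m + 1)) div n"
  define c where "c = (e * (m + 1)) mod n"
  have cn: "c < n" using m c_def by simp
  have cq: "c + n * q = e * (m + 1)" unfolding c_def q_def by (rule mod_mult_div_eq)
  have cqi: "int c + int n * int q = int e * (int m + 1)" using arg_cong[OF cq, of int] by (simp add: algebra_simps)
  have mi: "int n = 2 * int m + 1" using m by simp
  have ei: "int e = int b + int n - int a" using a unfolding e_def by simp
  have e2: "int (n - c) = int n - int c" using cn by simp
  have "int (c + a) - int (b + (n - c)) = int n * (int e - 2 * int q)"
  proof -
    have ci: "int c = int e * (int m + 1) - int n * int q" using cqi by linarith
    show ?thesis unfolding of_nat_add e2 ci ei mi by (simp add: algebra_simps)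
  qed
  then have "int n dvd int (c + a) - int (b + (n - c))" by simp
  then have "(c + a) mod n = (b + (n - c)) mod n" by (rule dvd_modeq)
  then show ?thesis using cn by (intro exI[of _ c]) (simp add: dmult)
qed

lemma D4: "odd n \<Longrightarrow> a < n \<Longrightarrow> \<exists>c<n. (c, False) \<otimes>\<^bsub>dihedral_group n\<^esub> (c, False) = (a, False)"
proof -
  assume n: "odd n" and a: "a < n"
  obtain m where m: "n = 2 * m + 1" using n oddE by blast
  define q where "q = (a * (m + 1)) div n"
  define c where "c = (a * (m + 1)) mod n"
  have cn: "c < n" using m c_def by simp
  have cq: "c + n * q = a * (m + 1)" unfolding c_def q_def by (rule mod_mult_div_eq)
  have cqi: "int c + int n * int q = int a * (int m + 1)" using arg_cong[OF cq, of int] by (simp add: algebra_simps)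
  have mi: "int n = 2 * int m + 1" using m by simp
  have "int (c + c) - int a = int n * (int a - 2 * int q)"
  proof -
    have ci: "int c = int a * (int m + 1) - int n * int q" using cqi by linarith
    show ?thesis unfolding of_nat_add ci mi by (simp add: algebra_simps)
  qed
  then have "int n dvd int (c + c) - int a" by simp
  then have "(c + c) mod n = a mod n" by (rule dvd_modeq)
  then show ?thesis using cn a by (intro exI[of _ c]) (simp add: dmult)
qed

lemma D5: "a < n \<Longrightarrow> (a, True) \<otimes>\<^bsub>dihedral_group n\<^esub> (a, True) = (0, False)"
  by (simp add: dmult)


locale cyc =
  fixes A :: "'a set" and mu :: "'a \<Rightarrow> 'a \<Rightarrow> 'a"
  assumes cs: "cycle_set A mu"
begin

abbreviation "PG \<equiv> perm_group A mu"
abbreviation "sig \<equiv> cs_sigma A mu"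

lemma mu_closed: "x \<in> A \<Longrightarrow> y \<in> A \<Longrightarrow> mu x y \<in> A"
  using cs unfolding cycle_set_def by blast

lemma mu_bij: "x \<in> A \<Longrightarrow> bij_betw (mu x) A A"
  using cs unfolding cycle_set_def by blast

lemma cyc_id: "x \<in> A \<Longrightarrow> y \<in> A \<Longrightarrow> z \<in> A \<Longrightarrow> mu (mu x y) (mu x z) = mu (mu y x) (mu y z)"
  using cs unfolding cycle_set_def by blast

lemma sig_Bij: "sig x \<in> Bij A" if "x \<in> A"
proof -
  have "bij_betw (sig x) A A" using mu_bij[OF that]
    by (rule bij_betw_cong[THEN iffD1, rotated]) (simp add: cs_sigma_def)
  moreover have "sig x \<in> extensional A" by (simp add: cs_sigma_def)
  ultimately show ?thesis by (simp add: Bij_def)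
qed

lemma gens_sub: "sig ` A \<subseteq> carrier (BijGroup A)"
  using sig_Bij by (auto simp: BijGroup_def)

lemma carrier_PG: "carrier PG = generate (BijGroup A) (sig ` A)"
  by (simp add: perm_group_def)

lemma subgroup_PG: "subgroup (carrier PG) (BijGroup A)"
  unfolding carrier_PG by (rule group.generate_is_subgroup[OF group_BijGroup gens_sub])

lemma group_PG: "group PG"
  unfolding perm_group_def using subgroup.subgroup_is_group[OF subgroup_PG group_BijGroup]
  by (simp add: perm_group_def)

lemma PG_Bij: "g \<in> carrier PG \<Longrightarrow> g \<in> Bij A"
  using subgroup.subset[OF subgroup_PG] by (auto simp: BijGroup_def)

lemma PG_mult: "g \<otimes>\<^bsub>PG\<^esub> k = compose A g k" if "g \<in> carrier PG" "k \<in> carrier PG"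
proof -
  have "g \<otimes>\<^bsub>PG\<^esub> k = g \<otimes>\<^bsub>BijGroup A\<^esub> k" by (simp add: perm_group_def)
  also have "\<dots> = compose A g k" using PG_Bij[of g] PG_Bij[of k] that by (simp add: BijGroup_def)
  finally show ?thesis .
qed

lemma PG_one: "\<one>\<^bsub>PG\<^esub> = (\<lambda>x\<in>A. x)"
proof -
  have "\<one>\<^bsub>PG\<^esub> = \<one>\<^bsub>BijGroup A\<^esub>" by (simp add: perm_group_def)
  then show ?thesis by (simp add: BijGroup_def)
qed

lemma PG_app_closed: "g \<in> carrier PG \<Longrightarrow> x \<in> A \<Longrightarrow> g x \<in> A"
  using PG_Bij by (auto simp: Bij_def bij_betw_def)

lemma PG_mult_app: "g \<in> carrier PG \<Longrightarrow> k \<in> carrier PG \<Longrightarrow> x \<in> A \<Longrightarrow> (g \<otimes>\<^bsub>PG\<^esub> k) x = g (k x)"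
  by (simp add: PG_mult compose_def)

lemma PG_one_app: "x \<in> A \<Longrightarrow> \<one>\<^bsub>PG\<^esub> x = x"
  by (simp add: PG_one)

lemma PG_ext: "g = k" if "g \<in> carrier PG" "k \<in> carrier PG" "\<And>x. x \<in> A \<Longrightarrow> g x = k x"
  using PG_Bij[OF that(1)] PG_Bij[OF that(2)] that(3) unfolding Bij_def
  by (metis IntD1 extensionalityI)

lemma sig_in: "x \<in> A \<Longrightarrow> sig x \<in> carrier PG"
  unfolding carrier_PG by (rule generate.incl) auto

lemma sig_app: "y \<in> A \<Longrightarrow> sig x y = mu x y"
  by (simp add: cs_sigma_def)

sublocale G: group PG by (rule group_PG)

lemma PG_eq: "PG = (BijGroup A)\<lparr>carrier := carrier PG\<rparr>"
  unfolding perm_group_def by simp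

lemma PG_one_eq: "\<one>\<^bsub>BijGroup A\<^esub> = \<one>\<^bsub>PG\<^esub>"
  by (subst PG_eq) simp

lemma PG_mult_eq: "h1 \<otimes>\<^bsub>BijGroup A\<^esub> h2 = h1 \<otimes>\<^bsub>PG\<^esub> h2"
  by (simp add: perm_group_def)

lemma PG_inv_eq: "h \<in> carrier PG \<Longrightarrow> inv\<^bsub>BijGroup A\<^esub> h = inv\<^bsub>PG\<^esub> h"
  using group.m_inv_consistent[OF group_BijGroup subgroup_PG, of h] PG_eq by simp

lemma inv_app1: "g \<in> carrier PG \<Longrightarrow> x \<in> A \<Longrightarrow> (inv\<^bsub>PG\<^esub> g) (g x) = x"
  using PG_mult_app[of "inv\<^bsub>PG\<^esub> g" g x] PG_one_app[of x] by simp

lemma inv_app2: "g \<in> carrier PG \<Longrightarrow> x \<in> A \<Longrightarrow> g ((inv\<^bsub>PG\<^esub> g) x) = x"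
  using PG_mult_app[of g "inv\<^bsub>PG\<^esub> g" x] PG_one_app[of x] by simp

lemma sig_mult: "x \<in> A \<Longrightarrow> y \<in> A \<Longrightarrow>
   sig (mu x y) \<otimes>\<^bsub>PG\<^esub> sig x = sig (mu y x) \<otimes>\<^bsub>PG\<^esub> sig y"
  by (rule PG_ext) (simp_all add: sig_in mu_closed PG_mult_app sig_app cyc_id)


abbreviation "tau y \<equiv> inv\<^bsub>PG\<^esub> (sig y)"

lemma tau_in: "x \<in> A \<Longrightarrow> tau x \<in> carrier PG"
  by (simp add: sig_in)

function th :: "'a list \<Rightarrow> ('a \<Rightarrow> 'a)" where
  "th [] = \<one>\<^bsub>PG\<^esub>"
| "th (y # ys) = tau y \<otimes>\<^bsub>PG\<^esub> th (map (mu y) ys)"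
  by pat_completeness auto
termination by (relation "measure length") auto

lemma map_mu_sub: "y \<in> A \<Longrightarrow> set ys \<subseteq> A \<Longrightarrow> set (map (mu y) ys) \<subseteq> A"
  using mu_closed by auto

lemma map_PG_sub: "g \<in> carrier PG \<Longrightarrow> set ys \<subseteq> A \<Longrightarrow> set (map g ys) \<subseteq> A"
  using PG_app_closed by auto

lemma th_in: "set xs \<subseteq> A \<Longrightarrow> th xs \<in> carrier PG"
proof (induction xs rule: th.induct)
  case 1 then show ?case by simp
next
  case (2 y ys) then show ?case using map_mu_sub tau_in by simp
qed

lemma th_append: "set xs \<subseteq> A \<Longrightarrow> set ys \<subseteq> A \<Longrightarrow>
   th (xs @ ys) = th xs \<otimes>\<^bsub>PG\<^esub> th (map (inv\<^bsub>PG\<^esub> (th xs)) ys)"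
proof (induction xs arbitrary: ys rule: th.induct)
  case 1
  have "map (inv\<^bsub>PG\<^esub> \<one>\<^bsub>PG\<^esub>) ys = ys"
    using 1 by (auto simp: PG_one_app intro!: map_idI)
  then show ?case using 1 th_in by simp
next
  case (2 y zs ys)
  let ?T = "th (map (mu y) zs)"
  have y: "y \<in> A" and zs: "set zs \<subseteq> A" using 2 by auto
  have T: "?T \<in> carrier PG" using th_in map_mu_sub y zs by blast
  have "th ((y # zs) @ ys) = tau y \<otimes>\<^bsub>PG\<^esub> th (map (mu y) zs @ map (mu y) ys)" by simp
  also have "\<dots> = tau y \<otimes>\<^bsub>PG\<^esub> (?T \<otimes>\<^bsub>PG\<^esub> th (map (inv\<^bsub>PG\<^esub> ?T) (map (mu y) ys)))"
    using 2 map_mu_sub y zs by simp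
  also have "map (inv\<^bsub>PG\<^esub> ?T) (map (mu y) ys) = map (inv\<^bsub>PG\<^esub> (tau y \<otimes>\<^bsub>PG\<^esub> ?T)) ys"
  proof -
    have "inv\<^bsub>PG\<^esub> (tau y \<otimes>\<^bsub>PG\<^esub> ?T) = inv\<^bsub>PG\<^esub> ?T \<otimes>\<^bsub>PG\<^esub> sig y"
      using T y by (simp add: G.inv_mult_group sig_in)
    then show ?thesis using 2(3) T y
      by (auto simp: PG_mult_app sig_in sig_app)
  qed
  finally have e: "th ((y # zs) @ ys) = tau y \<otimes>\<^bsub>PG\<^esub> (?T \<otimes>\<^bsub>PG\<^esub> th (map (inv\<^bsub>PG\<^esub> (tau y \<otimes>\<^bsub>PG\<^esub> ?T)) ys))" .
  have R: "th (map (inv\<^bsub>PG\<^esub> (tau y \<otimes>\<^bsub>PG\<^esub> ?T)) ys) \<in> carrier PG"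
    using T y 2(3) by (intro th_in map_PG_sub) (auto simp: tau_in)
  show ?case unfolding e using T y R by (simp add: G.m_assoc tau_in)
qed

lemma tau_swap: "x \<in> A \<Longrightarrow> y \<in> A \<Longrightarrow>
   tau x \<otimes>\<^bsub>PG\<^esub> tau (mu x y) = tau y \<otimes>\<^bsub>PG\<^esub> tau (mu y x)"
proof -
  assume x: "x \<in> A" and y: "y \<in> A"
  have "inv\<^bsub>PG\<^esub> (sig (mu x y) \<otimes>\<^bsub>PG\<^esub> sig x) = inv\<^bsub>PG\<^esub> (sig (mu y x) \<otimes>\<^bsub>PG\<^esub> sig y)"
    using sig_mult[OF x y] by simp
  then show ?thesis using x y by (simp add: G.inv_mult_group sig_in mu_closed)
qed

lemma th_swap: "x \<in> A \<Longrightarrow> y \<in> A \<Longrightarrow> set zs \<subseteq> A \<Longrightarrow> th (x # y # zs) = th (y # x # zs)"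
proof -
  assume x: "x \<in> A" and y: "y \<in> A" and zs: "set zs \<subseteq> A"
  have m: "map (mu (mu x y)) (map (mu x) zs) = map (mu (mu y x)) (map (mu y) zs)"
    using zs x y by (induct zs) (auto simp: cyc_id)
  let ?Z1 = "th (map (mu (mu x y)) (map (mu x) zs))"
  let ?Z2 = "th (map (mu (mu y x)) (map (mu y) zs))"
  have Z1: "?Z1 \<in> carrier PG" using x y zs by (intro th_in map_mu_sub) (auto simp: mu_closed)
  have Z2: "?Z2 \<in> carrier PG" using x y zs by (intro th_in map_mu_sub) (auto simp: mu_closed)
  have "th (x # y # zs) = tau x \<otimes>\<^bsub>PG\<^esub> (tau (mu x y) \<otimes>\<^bsub>PG\<^esub> ?Z1)"
    by (simp only: th.simps list.map)
  also have "\<dots> = (tau x \<otimes>\<^bsub>PG\<^esub> tau (mu x y)) \<otimes>\<^bsub>PG\<^esub> ?Z1"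
    using x y Z1 by (simp add: G.m_assoc tau_in mu_closed)
  also have "\<dots> = (tau y \<otimes>\<^bsub>PG\<^esub> tau (mu y x)) \<otimes>\<^bsub>PG\<^esub> ?Z2"
    by (simp only: tau_swap[OF x y] m)
  also have "\<dots> = tau y \<otimes>\<^bsub>PG\<^esub> (tau (mu y x) \<otimes>\<^bsub>PG\<^esub> ?Z2)"
    using x y Z2 by (simp add: G.m_assoc tau_in mu_closed)
  also have "\<dots> = th (y # x # zs)"
    by (simp only: th.simps list.map)
  finally show ?thesis .
qed

lemma th_swap_mid: "set us \<subseteq> A \<Longrightarrow> x \<in> A \<Longrightarrow> y \<in> A \<Longrightarrow> set zs \<subseteq> A \<Longrightarrow>
   th (us @ x # y # zs) = th (us @ y # x # zs)"
proof -
  assume us: "set us \<subseteq> A" and x: "x \<in> A" and y: "y \<in> A" and zs: "set zs \<subseteq> A"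
  let ?g = "inv\<^bsub>PG\<^esub> (th us)"
  have g: "?g \<in> carrier PG" using th_in us by simp
  have "th (map ?g (x # y # zs)) = th (map ?g (y # x # zs))"
    using th_swap[of "?g x" "?g y" "map ?g zs"] g x y zs PG_app_closed map_PG_sub by simp
  then show ?thesis using th_append us x y zs by simp
qed

lemma th_move: "set us \<subseteq> A \<Longrightarrow> x \<in> A \<Longrightarrow> set vs \<subseteq> A \<Longrightarrow> th (us @ x # vs) = th (x # us @ vs)"
proof (induction us arbitrary: vs rule: rev_induct)
  case Nil then show ?case by simp
next
  case (snoc w us)
  have "th ((us @ [w]) @ x # vs) = th (us @ w # x # vs)" by simp
  also have "\<dots> = th (us @ x # w # vs)" using snoc.prems by (intro th_swap_mid) auto
  also have "\<dots> = th (x # us @ w # vs)" using snoc by auto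
  finally show ?case by simp
qed

lemma th_perm_aux: "\<forall>xs ys. length xs = k \<longrightarrow> set xs \<subseteq> A \<longrightarrow> mset xs = mset ys \<longrightarrow> th xs = th ys"
proof (induction k)
  case 0 then show ?case by simp
next
  case (Suc k)
  show ?case
  proof (intro allI impI)
    fix xs ys :: "'a list"
    assume l: "length xs = Suc k" and A': "set xs \<subseteq> A" and m: "mset xs = mset ys"
    obtain x xs' where xs: "xs = x # xs'" using l by (cases xs) auto
    have "x \<in> set ys" using m xs by (metis list.set_intros(1) set_mset_mset)
    then obtain ys1 ys2 where ys: "ys = ys1 @ x # ys2" by (meson split_list)
    have sy: "set ys \<subseteq> A" using m A' by (metis set_mset_mset)
    have x: "x \<in> A" using A' xs by simp
    have m2: "mset xs' = mset (ys1 @ ys2)" using m xs ys by simp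
    have "th ys = th (x # ys1 @ ys2)" using ys sy x by (simp add: th_move)
    also have "\<dots> = tau x \<otimes>\<^bsub>PG\<^esub> th (map (mu x) (ys1 @ ys2))" by simp
    also have "th (map (mu x) (ys1 @ ys2)) = th (map (mu x) xs')"
      using Suc.IH m2 l xs A' x map_mu_sub by (metis length_Cons length_map mset_map nat.inject set_subset_Cons subset_trans)
    finally show "th xs = th ys" using xs by simp
  qed
qed

lemma th_perm: "mset xs = mset ys \<Longrightarrow> set xs \<subseteq> A \<Longrightarrow> th xs = th ys"
  using th_perm_aux by blast


end

locale cycf = cyc +
  assumes finG: "finite (carrier PG)" and finA: "finite A"
begin

lemma th_mult: "set xs \<subseteq> A \<Longrightarrow> set ys \<subseteq> A \<Longrightarrow>
   th xs \<otimes>\<^bsub>PG\<^esub> th ys = th (xs @ map (th xs) ys)"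
proof -
  assume xs: "set xs \<subseteq> A" and ys: "set ys \<subseteq> A"
  have g: "th xs \<in> carrier PG" using th_in xs by simp
  have "map (inv\<^bsub>PG\<^esub> (th xs)) (map (th xs) ys) = ys"
    using ys g by (induct ys) (auto simp: inv_app1)
  then show ?thesis using th_append[OF xs map_PG_sub[OF g ys]] by simp
qed

lemma th_single: "x \<in> A \<Longrightarrow> th [x] = tau x"
  by (simp add: tau_in)

lemma th_surj: "g \<in> carrier PG \<Longrightarrow> \<exists>xs. set xs \<subseteq> A \<and> th xs = g"
proof -
  define S where "S = {g. \<exists>xs. set xs \<subseteq> A \<and> th xs = g}"
  have one_S: "\<one>\<^bsub>PG\<^esub> \<in> S" unfolding S_def by (rule CollectI, rule exI[of _ "[]"]) simp
  have mul: "a \<otimes>\<^bsub>PG\<^esub> b \<in> S" if ab: "a \<in> S" "b \<in> S" for a b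
  proof -
    obtain xs where xs: "set xs \<subseteq> A" "th xs = a" using ab(1) unfolding S_def by blast
    obtain ys where ys: "set ys \<subseteq> A" "th ys = b" using ab(2) unfolding S_def by blast
    have "set (xs @ map (th xs) ys) \<subseteq> A" using xs ys map_PG_sub[OF th_in[OF xs(1)] ys(1)] by simp
    moreover have "th (xs @ map (th xs) ys) = a \<otimes>\<^bsub>PG\<^esub> b" using th_mult[OF xs(1) ys(1)] xs ys by simp
    ultimately show ?thesis unfolding S_def by blast
  qed
  have taus: "tau x \<in> S" if "x \<in> A" for x
  proof -
    have "set [x] \<subseteq> A" "th [x] = tau x" using th_single that by auto
    then show ?thesis unfolding S_def by blast
  qed
  have pows: "tau x [^]\<^bsub>PG\<^esub> (k::nat) \<in> S" if "x \<in> A" for x k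
  proof (induction k)
    case 0 show ?case using one_S by simp
  next
    case (Suc k)
    have "tau x [^]\<^bsub>PG\<^esub> Suc k = tau x [^]\<^bsub>PG\<^esub> k \<otimes>\<^bsub>PG\<^esub> tau x" by simp
    then show ?case using mul[OF Suc taus[OF that]] by simp
  qed
  have sigs: "sig x \<in> S" if x: "x \<in> A" for x
  proof -
    let ?N = "order PG"
    have N: "0 < ?N" unfolding order_def using finG G.one_closed by (simp add: card_gt_0_iff) blast
    have T: "tau x \<in> carrier PG" using tau_in[OF x] .
    have NN: "Suc (?N - 1) = ?N" using N by simp
    have "tau x [^]\<^bsub>PG\<^esub> (?N - 1) \<otimes>\<^bsub>PG\<^esub> tau x = tau x [^]\<^bsub>PG\<^esub> Suc (?N - 1)"
      by (rule G.nat_pow_Suc[symmetric])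
    also have "\<dots> = tau x [^]\<^bsub>PG\<^esub> ?N" unfolding NN ..
    also have "\<dots> = \<one>\<^bsub>PG\<^esub>" by (rule G.pow_order_eq_1[OF T])
    finally have ie: "inv\<^bsub>PG\<^esub> (tau x) = tau x [^]\<^bsub>PG\<^esub> (?N - 1)"
      by (rule G.inv_equality[OF _ T G.nat_pow_closed[OF T]])
    have "sig x = inv\<^bsub>PG\<^esub> (tau x)" using G.inv_inv[OF sig_in[OF x]] by (rule sym)
    also note ie
    finally have e: "sig x = tau x [^]\<^bsub>PG\<^esub> (?N - 1)" .
    show ?thesis by (subst e) (rule pows[OF x])
  qed
  assume g: "g \<in> carrier PG"
  have "g \<in> generate (BijGroup A) (sig ` A)" using g carrier_PG by simp
  then have "g \<in> S"
  proof (induction rule: generate.induct)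
    case one
    show ?case using one_S PG_one_eq by simp
  next
    case (incl h) then show ?case using sigs by auto
  next
    case (inv h)
    then obtain x where x: "x \<in> A" "h = sig x" by auto
    have "inv\<^bsub>BijGroup A\<^esub> h = inv\<^bsub>PG\<^esub> h"
      using PG_inv_eq x sig_in by simp
    then show ?case using taus x by simp
  next
    case (eng h1 h2)
    show ?case using mul[OF eng.IH] PG_mult_eq by simp
  qed
  then show ?thesis unfolding S_def by blast
qed

definition rep :: "('a \<Rightarrow> 'a) \<Rightarrow> 'a list" where
  "rep g = (SOME xs. set xs \<subseteq> A \<and> th xs = g)"

lemma rep: "g \<in> carrier PG \<Longrightarrow> set (rep g) \<subseteq> A \<and> th (rep g) = g"
  unfolding rep_def using th_surj by (rule someI_ex)

lemma th_map_wd: "k \<in> carrier PG \<Longrightarrow> set ys \<subseteq> A \<Longrightarrow> set ys' \<subseteq> A \<Longrightarrow> th ys = th ys' \<Longrightarrow>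
   th (map k ys) = th (map k ys')"
proof -
  assume k: "k \<in> carrier PG" and ys: "set ys \<subseteq> A" and ys': "set ys' \<subseteq> A" and e: "th ys = th ys'"
  obtain us where us: "set us \<subseteq> A" "th us = inv\<^bsub>PG\<^esub> k" using th_surj k by blast
  have ik: "inv\<^bsub>PG\<^esub> (th us) = k" using us k by simp
  have key: "th (map k zs) = k \<otimes>\<^bsub>PG\<^esub> (th zs \<otimes>\<^bsub>PG\<^esub> th (map (inv\<^bsub>PG\<^esub> (th zs)) us))"
    if zs: "set zs \<subseteq> A" for zs
  proof -
    have "th (us @ zs) = th us \<otimes>\<^bsub>PG\<^esub> th (map k zs)" using th_append[OF us(1) zs] ik by simp
    moreover have "th (us @ zs) = th (zs @ us)" using us zs by (intro th_perm) (auto simp: union_commute)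
    moreover have "th (zs @ us) = th zs \<otimes>\<^bsub>PG\<^esub> th (map (inv\<^bsub>PG\<^esub> (th zs)) us)"
      using th_append[OF zs us(1)] .
    ultimately have "th us \<otimes>\<^bsub>PG\<^esub> th (map k zs) = th zs \<otimes>\<^bsub>PG\<^esub> th (map (inv\<^bsub>PG\<^esub> (th zs)) us)"
      by simp
    then have "k \<otimes>\<^bsub>PG\<^esub> (th us \<otimes>\<^bsub>PG\<^esub> th (map k zs)) =
       k \<otimes>\<^bsub>PG\<^esub> (th zs \<otimes>\<^bsub>PG\<^esub> th (map (inv\<^bsub>PG\<^esub> (th zs)) us))" by simp
    moreover have "k \<otimes>\<^bsub>PG\<^esub> (th us \<otimes>\<^bsub>PG\<^esub> th (map k zs)) = th (map k zs)"
    proof -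
      have Z: "th (map k zs) \<in> carrier PG" using th_in map_PG_sub k zs by blast
      have U: "th us \<in> carrier PG" using th_in us by blast
      have "k \<otimes>\<^bsub>PG\<^esub> (th us \<otimes>\<^bsub>PG\<^esub> th (map k zs)) = (k \<otimes>\<^bsub>PG\<^esub> th us) \<otimes>\<^bsub>PG\<^esub> th (map k zs)"
        using Z U k by (simp add: G.m_assoc)
      also have "k \<otimes>\<^bsub>PG\<^esub> th us = \<one>\<^bsub>PG\<^esub>" using us(2) k by simp
      finally show ?thesis using Z by simp
    qed
    ultimately show ?thesis by simp
  qed
  show ?thesis using key[OF ys] key[OF ys'] e by simp
qed

definition lam :: "('a \<Rightarrow> 'a) \<Rightarrow> ('a \<Rightarrow> 'a) \<Rightarrow> ('a \<Rightarrow> 'a)" where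
  "lam k g = th (map k (rep g))"

lemma lam_th: "k \<in> carrier PG \<Longrightarrow> set ys \<subseteq> A \<Longrightarrow> lam k (th ys) = th (map k ys)"
  unfolding lam_def using rep[OF th_in, of ys] th_map_wd by blast

definition oplus :: "('a \<Rightarrow> 'a) \<Rightarrow> ('a \<Rightarrow> 'a) \<Rightarrow> ('a \<Rightarrow> 'a)" where
  "oplus g h = g \<otimes>\<^bsub>PG\<^esub> lam (inv\<^bsub>PG\<^esub> g) h"

lemma plus_th: "set xs \<subseteq> A \<Longrightarrow> set ys \<subseteq> A \<Longrightarrow> oplus (th xs) (th ys) = th (xs @ ys)"
  unfolding oplus_def using th_append lam_th th_in by simp


lemma rep_sub: "g \<in> carrier PG \<Longrightarrow> set (rep g) \<subseteq> A"
  using rep by blast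

lemma th_rep: "g \<in> carrier PG \<Longrightarrow> th (rep g) = g"
  using rep by blast

lemma oplus_closed: "g \<in> carrier PG \<Longrightarrow> h \<in> carrier PG \<Longrightarrow> oplus g h \<in> carrier PG"
proof -
  assume g: "g \<in> carrier PG" and h: "h \<in> carrier PG"
  have "oplus g h = th (rep g @ rep h)"
    using plus_th[OF rep_sub[OF g] rep_sub[OF h]] th_rep[OF g] th_rep[OF h] by simp
  then show ?thesis using th_in rep_sub[OF g] rep_sub[OF h] by simp
qed

lemma oplus_assoc: "a \<in> carrier PG \<Longrightarrow> b \<in> carrier PG \<Longrightarrow> c \<in> carrier PG \<Longrightarrow>
   oplus (oplus a b) c = oplus a (oplus b c)"
proof -
  assume a: "a \<in> carrier PG" and b: "b \<in> carrier PG" and c: "c \<in> carrier PG"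
  define xs ys zs where "xs = rep a" "ys = rep b" "zs = rep c"
  have s: "set xs \<subseteq> A" "set ys \<subseteq> A" "set zs \<subseteq> A" using rep_sub a b c xs_ys_zs_def by auto
  have e: "a = th xs" "b = th ys" "c = th zs" using th_rep a b c xs_ys_zs_def by auto
  show ?thesis unfolding e using s by (simp add: plus_th)
qed

lemma oplus_comm: "a \<in> carrier PG \<Longrightarrow> b \<in> carrier PG \<Longrightarrow> oplus a b = oplus b a"
proof -
  assume a: "a \<in> carrier PG" and b: "b \<in> carrier PG"
  define xs ys where "xs = rep a" "ys = rep b"
  have s: "set xs \<subseteq> A" "set ys \<subseteq> A" using rep_sub a b xs_ys_def by auto
  have e: "a = th xs" "b = th ys" using th_rep a b xs_ys_def by auto
  have "th (xs @ ys) = th (ys @ xs)" using s by (intro th_perm) (auto simp: union_commute)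
  then show ?thesis unfolding e using s by (simp add: plus_th)
qed

lemma oplus_one: "a \<in> carrier PG \<Longrightarrow> oplus \<one>\<^bsub>PG\<^esub> a = a"
proof -
  assume a: "a \<in> carrier PG"
  define xs where "xs = rep a"
  have s: "set xs \<subseteq> A" using rep_sub a xs_def by auto
  have e: "a = th xs" using th_rep a xs_def by auto
  have "oplus (th []) (th xs) = th xs" using plus_th[of "[]" xs] s by simp
  then show ?thesis unfolding e by simp
qed

lemma oplus_inv_ex: "a \<in> carrier PG \<Longrightarrow> \<exists>b\<in>carrier PG. oplus b a = \<one>\<^bsub>PG\<^esub>"
proof -
  assume a: "a \<in> carrier PG"
  define xs where "xs = rep a"
  have s: "set xs \<subseteq> A" using rep_sub a xs_def by auto
  have e: "th xs = a" using th_rep a xs_def by auto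
  obtain zs where zs: "set zs \<subseteq> A" "th zs = inv\<^bsub>PG\<^esub> a" using th_surj a by blast
  let ?ys = "map a zs"
  have ys: "set ?ys \<subseteq> A" using map_PG_sub a zs by blast
  have mm: "map (inv\<^bsub>PG\<^esub> a) ?ys = zs" using zs(1) a by (induct zs) (auto simp: inv_app1)
  have "oplus (th ?ys) a = oplus a (th ?ys)" using a ys th_in oplus_comm by blast
  also have "\<dots> = th (xs @ ?ys)" using plus_th[OF s ys] e by simp
  also have "\<dots> = a \<otimes>\<^bsub>PG\<^esub> th zs" using th_append[OF s ys] e mm by simp
  also have "\<dots> = \<one>\<^bsub>PG\<^esub>" using zs a by simp
  finally show ?thesis using ys th_in by blast
qed

definition MM :: "('a \<Rightarrow> 'a) monoid" where
  "MM = \<lparr>carrier = carrier PG, monoid.mult = oplus, one = \<one>\<^bsub>PG\<^esub>\<rparr>"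

lemma MM_simps [simp]: "carrier MM = carrier PG" "(\<otimes>\<^bsub>MM\<^esub>) = oplus" "\<one>\<^bsub>MM\<^esub> = \<one>\<^bsub>PG\<^esub>"
  by (simp_all add: MM_def)

lemma comm_MM: "comm_group MM"
proof (rule comm_groupI)
  fix x y z assume "x \<in> carrier MM" "y \<in> carrier MM" "z \<in> carrier MM"
  then show "x \<otimes>\<^bsub>MM\<^esub> y \<otimes>\<^bsub>MM\<^esub> z = x \<otimes>\<^bsub>MM\<^esub> (y \<otimes>\<^bsub>MM\<^esub> z)" using oplus_assoc by simp
next
  fix x y assume "x \<in> carrier MM" "y \<in> carrier MM"
  then show "x \<otimes>\<^bsub>MM\<^esub> y = y \<otimes>\<^bsub>MM\<^esub> x" using oplus_comm by simp
next
  fix x y assume "x \<in> carrier MM" "y \<in> carrier MM"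
  then show "x \<otimes>\<^bsub>MM\<^esub> y \<in> carrier MM" using oplus_closed by simp
next
  fix x assume "x \<in> carrier MM"
  then show "\<one>\<^bsub>MM\<^esub> \<otimes>\<^bsub>MM\<^esub> x = x" using oplus_one by simp
next
  fix x assume "x \<in> carrier MM"
  then show "\<exists>y\<in>carrier MM. y \<otimes>\<^bsub>MM\<^esub> x = \<one>\<^bsub>MM\<^esub>" using oplus_inv_ex by simp
qed simp

lemma lam_in: "k \<in> carrier PG \<Longrightarrow> g \<in> carrier PG \<Longrightarrow> lam k g \<in> carrier PG"
  unfolding lam_def using th_in map_PG_sub rep_sub by blast

lemma lam_plus: "k \<in> carrier PG \<Longrightarrow> a \<in> carrier PG \<Longrightarrow> b \<in> carrier PG \<Longrightarrow>
   lam k (oplus a b) = oplus (lam k a) (lam k b)"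
proof -
  assume k: "k \<in> carrier PG" and a: "a \<in> carrier PG" and b: "b \<in> carrier PG"
  define xs ys where "xs = rep a" "ys = rep b"
  have xs: "set xs \<subseteq> A" "a = th xs" using rep_sub th_rep a xs_ys_def by auto
  have ys: "set ys \<subseteq> A" "b = th ys" using rep_sub th_rep b xs_ys_def by auto
  have "lam k (oplus a b) = th (map k (xs @ ys))" using xs ys k by (simp add: plus_th lam_th)
  also have "\<dots> = oplus (th (map k xs)) (th (map k ys))"
    using plus_th map_PG_sub[OF k xs(1)] map_PG_sub[OF k ys(1)] by simp
  finally show ?thesis using xs ys k by (simp add: lam_th)
qed

lemma lam_one: "k \<in> carrier PG \<Longrightarrow> lam k \<one>\<^bsub>PG\<^esub> = \<one>\<^bsub>PG\<^esub>"
  using lam_th[of k "[]"] by simp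

lemma lam_lam: "k \<in> carrier PG \<Longrightarrow> k' \<in> carrier PG \<Longrightarrow> g \<in> carrier PG \<Longrightarrow>
   lam k (lam k' g) = lam (k \<otimes>\<^bsub>PG\<^esub> k') g"
proof -
  assume k: "k \<in> carrier PG" and k': "k' \<in> carrier PG" and g: "g \<in> carrier PG"
  define xs where "xs = rep g"
  have xs: "set xs \<subseteq> A" "g = th xs" using rep_sub th_rep g xs_def by auto
  have "map k (map k' xs) = map (k \<otimes>\<^bsub>PG\<^esub> k') xs" using xs(1) k k' by (induct xs) (auto simp: PG_mult_app)
  then show ?thesis using xs k k' map_PG_sub by (simp add: lam_th del: map_map)
qed

lemma lam_id: "g \<in> carrier PG \<Longrightarrow> lam \<one>\<^bsub>PG\<^esub> g = g"
proof -
  assume g: "g \<in> carrier PG"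
  define xs where "xs = rep g"
  have xs: "set xs \<subseteq> A" "g = th xs" using rep_sub th_rep g xs_def by auto
  have "map \<one>\<^bsub>PG\<^esub> xs = xs" using xs(1) by (induct xs) (auto simp: PG_one_app)
  then show ?thesis using xs by (simp add: lam_th)
qed

lemma lam_inv: "k \<in> carrier PG \<Longrightarrow> g \<in> carrier PG \<Longrightarrow> lam (inv\<^bsub>PG\<^esub> k) (lam k g) = g"
  by (simp add: lam_lam lam_id)

lemma lam_tau: "k \<in> carrier PG \<Longrightarrow> x \<in> A \<Longrightarrow> lam k (tau x) = tau (k x)"
  using lam_th[of k "[x]"] th_single PG_app_closed by simp

lemma mult_plus: "g \<in> carrier PG \<Longrightarrow> h \<in> carrier PG \<Longrightarrow> g \<otimes>\<^bsub>PG\<^esub> h = oplus g (lam g h)"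
  unfolding oplus_def by (simp add: lam_lam lam_id lam_in)

definition xsA :: "'a list" where "xsA = (SOME xs. set xs = A \<and> distinct xs)"

lemma xsA: "set xsA = A" "distinct xsA"
  unfolding xsA_def using finite_distinct_list[OF finA] by (metis (mono_tags, lifting) someI_ex)+

definition jj :: "'a \<Rightarrow> 'a" where "jj = th xsA"

lemma jj_in: "jj \<in> carrier PG"
  unfolding jj_def using th_in xsA by simp

lemma lam_jj: "k \<in> carrier PG \<Longrightarrow> lam k jj = jj"
proof -
  assume k: "k \<in> carrier PG"
  have bij: "bij_betw k A A" using PG_Bij[OF k] by (simp add: Bij_def)
  have d: "distinct (map k xsA)" using xsA bij by (simp add: distinct_map bij_betw_def)
  have st: "set (map k xsA) = A" using xsA bij by (simp add: bij_betw_def)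
  have "mset (map k xsA) = mset xsA" using d st xsA
    by (metis set_eq_iff_mset_eq_distinct)
  then have "th (map k xsA) = th xsA" using st by (intro th_perm) auto
  then show ?thesis unfolding jj_def using lam_th[OF k] xsA by simp
qed

lemma plus_jj: "h \<in> carrier PG \<Longrightarrow> oplus h jj = h \<otimes>\<^bsub>PG\<^esub> jj"
  unfolding oplus_def using lam_jj by simp

lemma lam_inv_jj: "h \<in> carrier PG \<Longrightarrow> lam (inv\<^bsub>PG\<^esub> jj) h = inv\<^bsub>PG\<^esub> jj \<otimes>\<^bsub>PG\<^esub> h \<otimes>\<^bsub>PG\<^esub> jj"
proof -
  assume h: "h \<in> carrier PG"
  have "jj \<otimes>\<^bsub>PG\<^esub> lam (inv\<^bsub>PG\<^esub> jj) h = h \<otimes>\<^bsub>PG\<^esub> jj"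
    using oplus_comm[OF jj_in h] plus_jj[OF h] unfolding oplus_def by simp
  then have "inv\<^bsub>PG\<^esub> jj \<otimes>\<^bsub>PG\<^esub> (jj \<otimes>\<^bsub>PG\<^esub> lam (inv\<^bsub>PG\<^esub> jj) h) = inv\<^bsub>PG\<^esub> jj \<otimes>\<^bsub>PG\<^esub> (h \<otimes>\<^bsub>PG\<^esub> jj)"
    by simp
  then show ?thesis using h jj_in lam_in
    by (simp add: G.m_assoc[symmetric])
qed


end

locale cycd = cycf +
  fixes n :: nat
  assumes cardG: "card (carrier PG) = 2 * n" and oddn: "odd n"
    and trans: "\<And>x y. x \<in> A \<Longrightarrow> y \<in> A \<Longrightarrow> \<exists>g\<in>carrier PG. g x = y"
begin

sublocale M: comm_group MM by (rule comm_MM)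

lemma orderM: "order MM = 2 * n"
  by (simp add: order_def cardG)

lemma finM: "finite (carrier MM)" using finG by simp

lemma t_exists: "\<exists>t\<in>carrier PG. t \<noteq> \<one>\<^bsub>PG\<^esub> \<and> oplus t t = \<one>\<^bsub>PG\<^esub>"
proof -
  obtain H where H: "subgroup H MM" "card H = 2"
    using sylow_thm[of 2 MM 1 n] M.is_group orderM finM by auto
  obtain u v where uv: "H = {u, v}" "u \<noteq> v" using H(2) card_2_iff by metis
  have one: "\<one>\<^bsub>PG\<^esub> \<in> H" using subgroup.one_closed[OF H(1)] by simp
  obtain t where t: "H = {\<one>\<^bsub>PG\<^esub>, t}" "t \<noteq> \<one>\<^bsub>PG\<^esub>" using uv one by auto
  have tc: "t \<in> carrier PG" using subgroup.subset[OF H(1)] t by auto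
  have "oplus t t \<in> H" using subgroup.m_closed[OF H(1), of t t] t by simp
  moreover have "oplus t t \<noteq> t"
  proof
    assume "oplus t t = t"
    then have "t \<otimes>\<^bsub>MM\<^esub> t = t" by simp
    then have "t = \<one>\<^bsub>MM\<^esub>" using M.l_cancel_one[of t t] tc by simp
    then show False using t by simp
  qed
  ultimately have "oplus t t = \<one>\<^bsub>PG\<^esub>" using t by auto
  then show ?thesis using tc t by blast
qed

definition tt where "tt = (SOME t. t \<in> carrier PG \<and> t \<noteq> \<one>\<^bsub>PG\<^esub> \<and> oplus t t = \<one>\<^bsub>PG\<^esub>)"

lemma tt: "tt \<in> carrier PG" "tt \<noteq> \<one>\<^bsub>PG\<^esub>" "oplus tt tt = \<one>\<^bsub>PG\<^esub>"
  using someI_ex[OF t_exists[unfolded Bex_def]] unfolding tt_def by blast+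

lemma tt_unique: "b \<in> carrier PG \<Longrightarrow> oplus b b = \<one>\<^bsub>PG\<^esub> \<Longrightarrow> b = \<one>\<^bsub>PG\<^esub> \<or> b = tt"
proof (rule ccontr)
  assume b: "b \<in> carrier PG" and bb: "oplus b b = \<one>\<^bsub>PG\<^esub>" and nb: "\<not> (b = \<one>\<^bsub>PG\<^esub> \<or> b = tt)"
  let ?o = "\<one>\<^bsub>PG\<^esub>"
  let ?c = "oplus tt b"
  have t: "tt \<in> carrier PG" "tt \<noteq> ?o" "oplus tt tt = ?o" using tt by auto
  have c: "?c \<in> carrier PG" using oplus_closed t b by simp
  have ttx: "oplus tt (oplus tt x) = x" if "x \<in> carrier PG" for x
    using that t oplus_assoc[of tt tt x, symmetric] oplus_one by simp
  have bbx: "oplus b (oplus b x) = x" if "x \<in> carrier PG" for x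
    using that b bb oplus_assoc[of b b x, symmetric] oplus_one by simp
  have ro: "oplus x ?o = x" if "x \<in> carrier PG" for x
    using that oplus_comm[of x ?o] oplus_one by simp
  have tb: "oplus b tt = ?c" using oplus_comm t b by simp
  let ?K = "{?o, tt, b, ?c}"
  have sub: "subgroup ?K MM"
  proof (rule M.subgroupI)
    show "?K \<subseteq> carrier MM" using t b c by auto
    show "?K \<noteq> {}" by simp
  next
    fix a assume a: "a \<in> ?K"
    have self: "oplus a a = ?o"
    proof -
      have "oplus ?c ?c = ?o"
      proof -
        have "oplus ?c ?c = oplus tt (oplus b (oplus tt b))" using oplus_assoc t b c by simp
        also have "oplus b (oplus tt b) = oplus b (oplus b tt)" using oplus_comm t b by simp
        also have "\<dots> = tt" using bbx t by simp
        finally show ?thesis using t by simp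
      qed
      then show ?thesis using a t bb oplus_one by auto
    qed
    have ac: "a \<in> carrier PG" using a t b c by auto
    have "inv\<^bsub>MM\<^esub> a = a" using M.inv_equality[of a a] self ac by simp
    then show "inv\<^bsub>MM\<^esub> a \<in> ?K" using a by simp
  next
    fix a d assume a: "a \<in> ?K" and d: "d \<in> ?K"
    have e1: "oplus tt ?c = b" using ttx b by simp
    have e6: "oplus b tt = ?c" by (rule tb)
    have e2: "oplus b ?c = tt"
    proof -
      have "oplus b ?c = oplus b (oplus b tt)" using e6 by simp
      then show ?thesis using bbx t by simp
    qed
    have e3: "oplus ?c tt = b" using oplus_comm[OF c t(1)] e1 by simp
    have e4: "oplus ?c b = tt" using oplus_comm[OF c b] e2 by simp
    have e5: "oplus ?c ?c = ?o"
    proof -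
      have "oplus ?c ?c = oplus tt (oplus b ?c)" using oplus_assoc t b c by simp
      then show ?thesis using e2 t by simp
    qed
    have "oplus a d \<in> ?K"
      using a d by (elim insertE emptyE) (simp_all only: e1 e2 e3 e4 e5 e6 t(3) bb oplus_one[OF t(1)]
        oplus_one[OF b] oplus_one[OF c] oplus_one[OF G.one_closed] ro[OF t(1)] ro[OF b] ro[OF c]
        insert_iff simp_thms)
    then show "a \<otimes>\<^bsub>MM\<^esub> d \<in> ?K" by simp
  qed
  have d1: "?c \<noteq> ?o"
  proof
    assume "?c = ?o"
    then have "oplus tt ?c = tt" using ro t by simp
    then have "b = tt" using ttx b by simp
    then show False using nb by simp
  qed
  have d2: "?c \<noteq> tt"
  proof
    assume "?c = tt"
    then have "oplus tt ?c = ?o" using t by simp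
    then have "b = ?o" using ttx b by simp
    then show False using nb by simp
  qed
  have d3: "?c \<noteq> b"
  proof
    assume "?c = b"
    then have "oplus b ?c = ?o" using bb by simp
    then have "tt = ?o" using bbx t tb by metis
    then show False using t by simp
  qed
  have "card ?K = 4" using d1 d2 d3 t nb by auto
  then have "4 dvd 2 * n" using M.lagrange[OF sub] orderM by (metis dvd_triv_right)
  then show False using oddn by presburger
qed


abbreviation mpow :: "('a \<Rightarrow> 'a) \<Rightarrow> nat \<Rightarrow> ('a \<Rightarrow> 'a)" where
  "mpow a m \<equiv> a [^]\<^bsub>MM\<^esub> m"

lemma mpow_closed: "a \<in> carrier PG \<Longrightarrow> mpow a m \<in> carrier PG"
  using M.nat_pow_closed[of a m] by simp

lemma mpow_n: "a \<in> carrier PG \<Longrightarrow> mpow a n = \<one>\<^bsub>PG\<^esub> \<or> mpow a n = tt"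
proof -
  assume a: "a \<in> carrier PG"
  have "mpow a (n + n) = \<one>\<^bsub>PG\<^esub>" using M.pow_order_eq_1[of a] a orderM by (simp add: mult_2)
  then have "oplus (mpow a n) (mpow a n) = \<one>\<^bsub>PG\<^esub>" using M.nat_pow_mult[of a n n] a by simp
  then show ?thesis using tt_unique mpow_closed a by blast
qed

definition pp :: "('a \<Rightarrow> 'a) \<Rightarrow> bool" where "pp a = (mpow a n = tt)"

lemma ro: "x \<in> carrier PG \<Longrightarrow> oplus x \<one>\<^bsub>PG\<^esub> = x"
  using oplus_comm[of x "\<one>\<^bsub>PG\<^esub>"] oplus_one by simp

lemma pp_plus: "a \<in> carrier PG \<Longrightarrow> b \<in> carrier PG \<Longrightarrow> pp (oplus a b) = (pp a \<noteq> pp b)"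
proof -
  assume a: "a \<in> carrier PG" and b: "b \<in> carrier PG"
  have "mpow (oplus a b) n = oplus (mpow a n) (mpow b n)"
    using M.nat_pow_distrib[of a b n] a b by simp
  then show ?thesis unfolding pp_def using mpow_n[OF a] mpow_n[OF b] tt oplus_one ro by auto
qed

lemma lam_mpow: "k \<in> carrier PG \<Longrightarrow> a \<in> carrier PG \<Longrightarrow> lam k (mpow a m) = mpow (lam k a) m"
proof (induction m)
  case 0 then show ?case using lam_one by simp
next
  case (Suc m)
  have "lam k (mpow a (Suc m)) = lam k (oplus (mpow a m) a)" by simp
  also have "\<dots> = oplus (lam k (mpow a m)) (lam k a)" using lam_plus Suc mpow_closed by simp
  finally show ?case using Suc by simp
qed

lemma lam_tt: "k \<in> carrier PG \<Longrightarrow> lam k tt = tt"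
proof -
  assume k: "k \<in> carrier PG"
  have c: "lam k tt \<in> carrier PG" using lam_in k tt by simp
  have "oplus (lam k tt) (lam k tt) = \<one>\<^bsub>PG\<^esub>" using lam_plus[OF k tt(1) tt(1)] tt lam_one k by simp
  moreover have "lam k tt \<noteq> \<one>\<^bsub>PG\<^esub>"
  proof
    assume "lam k tt = \<one>\<^bsub>PG\<^esub>"
    then have "lam (inv\<^bsub>PG\<^esub> k) (lam k tt) = \<one>\<^bsub>PG\<^esub>" using lam_one k by simp
    then show False using lam_inv k tt by simp
  qed
  ultimately show ?thesis using tt_unique c by blast
qed

lemma pp_lam: "k \<in> carrier PG \<Longrightarrow> a \<in> carrier PG \<Longrightarrow> pp (lam k a) = pp a"
proof -
  assume k: "k \<in> carrier PG" and a: "a \<in> carrier PG"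
  have "pp (lam k a) = (lam k (mpow a n) = lam k tt)" unfolding pp_def using lam_mpow k a lam_tt by simp
  also have "\<dots> = (mpow a n = tt)"
    using lam_inv[OF k] mpow_closed[OF a] tt(1) by metis
  finally show ?thesis unfolding pp_def .
qed

lemma pp_mult: "g \<in> carrier PG \<Longrightarrow> h \<in> carrier PG \<Longrightarrow> pp (g \<otimes>\<^bsub>PG\<^esub> h) = (pp g \<noteq> pp h)"
  using mult_plus pp_plus pp_lam lam_in by simp

lemma pp_one: "\<not> pp \<one>\<^bsub>PG\<^esub>"
  unfolding pp_def using M.nat_pow_one tt by simp

lemma pp_tt: "pp tt"
proof -
  have "mpow tt (2 * m + 1) = tt" for m
  proof (induction m)
    case 0 then show ?case using tt oplus_one by simp
  next
    case (Suc m)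
    have "mpow tt (2 * Suc m + 1) = mpow tt (2 * m + 1) \<otimes>\<^bsub>MM\<^esub> mpow tt 2"
      using M.nat_pow_mult[of tt "2 * m + 1" 2] tt by simp
    also have "mpow tt 2 = oplus (oplus \<one>\<^bsub>PG\<^esub> tt) tt" by (simp add: numeral_2_eq_2)
    also have "\<dots> = \<one>\<^bsub>PG\<^esub>" using oplus_one tt by simp
    finally show ?case using Suc tt ro by simp
  qed
  moreover obtain m where "n = 2 * m + 1" using oddn oddE by blast
  ultimately show ?thesis unfolding pp_def by simp
qed

lemma pp_tau_const: "x \<in> A \<Longrightarrow> y \<in> A \<Longrightarrow> pp (tau x) = pp (tau y)"
proof -
  assume x: "x \<in> A" and y: "y \<in> A"
  obtain g where g: "g \<in> carrier PG" "g x = y" using trans x y by blast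
  have "tau y = lam g (tau x)" using lam_tau g x by simp
  then show ?thesis using pp_lam g tau_in x by simp
qed

lemma pp_tau: "x \<in> A \<Longrightarrow> pp (tau x)"
proof (rule ccontr)
  assume x: "x \<in> A" and nx: "\<not> pp (tau x)"
  have all: "\<not> pp (tau y)" if "y \<in> A" for y using pp_tau_const[OF x that] nx by simp
  have sg: "\<not> pp (sig y)" if y: "y \<in> A" for y
  proof -
    have "pp (sig y \<otimes>\<^bsub>PG\<^esub> tau y) = (pp (sig y) \<noteq> pp (tau y))" by (rule pp_mult[OF sig_in[OF y] tau_in[OF y]])
    moreover have "sig y \<otimes>\<^bsub>PG\<^esub> tau y = \<one>\<^bsub>PG\<^esub>" using sig_in y by simp
    ultimately show ?thesis using pp_one all y by simp
  qed
  have "\<not> pp g" if "g \<in> generate (BijGroup A) (sig ` A)" for g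
    using that
  proof (induction rule: generate.induct)
    case one then show ?case using pp_one PG_one_eq by simp
  next
    case (incl h) then show ?case using sg by auto
  next
    case (inv h)
    then obtain y where y: "y \<in> A" "h = sig y" by auto
    have "inv\<^bsub>BijGroup A\<^esub> h = inv\<^bsub>PG\<^esub> h" using PG_inv_eq y sig_in by simp
    then show ?case using all y by simp
  next
    case (eng h1 h2)
    have "h1 \<in> carrier PG" "h2 \<in> carrier PG" using eng.hyps carrier_PG by auto
    then show ?case using pp_mult eng.IH PG_mult_eq by simp
  qed
  then show False using tt pp_tt carrier_PG by auto
qed

lemma pp_th: "set xs \<subseteq> A \<Longrightarrow> pp (th xs) = odd (length xs)"
proof (induction xs rule: th.induct)
  case 1 then show ?case using pp_one by simp
next
  case (2 y ys)
  have y: "y \<in> A" and ys: "set (map (mu y) ys) \<subseteq> A" using 2 map_mu_sub by auto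
  have "pp (th (y # ys)) = (pp (tau y) \<noteq> pp (th (map (mu y) ys)))"
    using pp_mult tau_in[OF y] th_in[OF ys] by simp
  then show ?case using 2 pp_tau[OF y] ys by simp
qed

lemma pp_jj: "pp jj = odd (card A)"
  unfolding jj_def using pp_th xsA distinct_card by (metis order_refl)


end

locale cyce = cycd +
  fixes h
  assumes hiso: "h \<in> iso PG (dihedral_group n)" and n3: "n \<ge> 3"
begin

abbreviation DG where "DG \<equiv> dihedral_group n"

lemma hbij: "bij_betw h (carrier PG) ({0..<n} \<times> UNIV)"
  using hiso by (simp add: iso_def dcarrier)

lemma hmult: "g \<in> carrier PG \<Longrightarrow> k \<in> carrier PG \<Longrightarrow> h (g \<otimes>\<^bsub>PG\<^esub> k) = h g \<otimes>\<^bsub>DG\<^esub> h k"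
  using hiso by (simp add: iso_def hom_def)

lemma hcar: "g \<in> carrier PG \<Longrightarrow> fst (h g) < n"
proof -
  assume g: "g \<in> carrier PG"
  have "h g \<in> {0..<n} \<times> UNIV" using hbij g unfolding bij_betw_def by blast
  then show ?thesis by (auto simp: mem_Times_iff)
qed

lemma hinj: "g \<in> carrier PG \<Longrightarrow> k \<in> carrier PG \<Longrightarrow> h g = h k \<Longrightarrow> g = k"
  using hbij by (auto simp: bij_betw_def inj_on_def)

lemma hsurj: "a < n \<Longrightarrow> \<exists>g\<in>carrier PG. h g = (a, b)"
proof -
  assume a: "a < n"
  have "(a, b) \<in> h ` carrier PG" using hbij a unfolding bij_betw_def by simp
  then show ?thesis by (auto simp: image_iff)
qed

lemma hpair: "g \<in> carrier PG \<Longrightarrow> h g = (fst (h g), snd (h g))" by simp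

lemma h_one: "h \<one>\<^bsub>PG\<^esub> = (0, False)"
proof -
  obtain a b where ab: "h \<one>\<^bsub>PG\<^esub> = (a, b)" by (cases "h \<one>\<^bsub>PG\<^esub>")
  have an: "a < n" using hcar[of "\<one>\<^bsub>PG\<^esub>"] ab by simp
  have "h \<one>\<^bsub>PG\<^esub> = h \<one>\<^bsub>PG\<^esub> \<otimes>\<^bsub>DG\<^esub> h \<one>\<^bsub>PG\<^esub>" using hmult[of "\<one>\<^bsub>PG\<^esub>" "\<one>\<^bsub>PG\<^esub>"] by simp
  then have e: "(a, b) = ((if b then a + (n - a) else a + a) mod n, b \<noteq> b)" unfolding ab dmult .
  have "snd (a, b) = snd ((if b then a + (n - a) else a + a) mod n, b \<noteq> b)" using e by (rule arg_cong)
  then have b: "b = False" by simp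
  have "fst (a, b) = fst ((if b then a + (n - a) else a + a) mod n, b \<noteq> b)" using e by (rule arg_cong)
  then have "a = (if b then a + (n - a) else a + a) mod n" by (simp only: fst_conv)
  then have "a = (a + a) mod n" using b by (simp only: if_False)
  then have "(a + a) mod n = a" by (rule sym)
  then have "a = 0"
  proof (cases "a + a < n")
    case True
    then show ?thesis using \<open>(a + a) mod n = a\<close> by simp
  next
    case False
    then have "(a + a) mod n = (a + a - n) mod n" by (simp add: le_mod_geq)
    also have "\<dots> = a + a - n" using an by simp
    finally show ?thesis using \<open>(a + a) mod n = a\<close> an by simp
  qed
  then show ?thesis using ab b by simp
qed

definition rot :: "('a \<Rightarrow> 'a) \<Rightarrow> bool" where "rot g = (snd (h g) = False)"

lemma rot_mult: "g \<in> carrier PG \<Longrightarrow> k \<in> carrier PG \<Longrightarrow> rot (g \<otimes>\<^bsub>PG\<^esub> k) = (rot g = rot k)"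
proof -
  assume g: "g \<in> carrier PG" and k: "k \<in> carrier PG"
  obtain a b c d where "h g = (a, b)" "h k = (c, d)" by (cases "h g", cases "h k") auto
  then show ?thesis unfolding rot_def using hmult[OF g k] by (simp add: dmult)
qed

lemma rot_one: "rot \<one>\<^bsub>PG\<^esub>" unfolding rot_def using h_one by simp

lemma rot_inv: "g \<in> carrier PG \<Longrightarrow> rot (inv\<^bsub>PG\<^esub> g) = rot g"
  using rot_mult[of g "inv\<^bsub>PG\<^esub> g"] rot_one by auto
lemma R1: "\<rho> \<in> carrier PG \<Longrightarrow> rot \<rho> \<Longrightarrow> g \<in> carrier PG \<Longrightarrow>
   \<rho> \<otimes>\<^bsub>PG\<^esub> g = g \<otimes>\<^bsub>PG\<^esub> \<rho> \<or> \<rho> \<otimes>\<^bsub>PG\<^esub> (g \<otimes>\<^bsub>PG\<^esub> \<rho>) = g"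
proof -
  assume r: "\<rho> \<in> carrier PG" "rot \<rho>" and g: "g \<in> carrier PG"
  obtain a where hr: "h \<rho> = (a, False)" using r unfolding rot_def by (cases "h \<rho>") auto
  obtain c d where hg: "h g = (c, d)" by (cases "h g") auto
  have a: "a < n" using hcar[OF r(1)] hr by simp
  have c: "c < n" using hcar[OF g] hg by simp
  have D: "h \<rho> \<otimes>\<^bsub>DG\<^esub> h g = h g \<otimes>\<^bsub>DG\<^esub> h \<rho> \<or> h \<rho> \<otimes>\<^bsub>DG\<^esub> (h g \<otimes>\<^bsub>DG\<^esub> h \<rho>) = h g"
    unfolding hr hg by (rule D1[OF a c])
  then show ?thesis
  proof
    assume "h \<rho> \<otimes>\<^bsub>DG\<^esub> h g = h g \<otimes>\<^bsub>DG\<^esub> h \<rho>"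
    then have "h (\<rho> \<otimes>\<^bsub>PG\<^esub> g) = h (g \<otimes>\<^bsub>PG\<^esub> \<rho>)" using hmult[OF r(1) g] hmult[OF g r(1)] by simp
    then have "\<rho> \<otimes>\<^bsub>PG\<^esub> g = g \<otimes>\<^bsub>PG\<^esub> \<rho>" by (rule hinj[OF G.m_closed[OF r(1) g] G.m_closed[OF g r(1)]])
    then show ?thesis ..
  next
    assume "h \<rho> \<otimes>\<^bsub>DG\<^esub> (h g \<otimes>\<^bsub>DG\<^esub> h \<rho>) = h g"
    then have "h (\<rho> \<otimes>\<^bsub>PG\<^esub> (g \<otimes>\<^bsub>PG\<^esub> \<rho>)) = h g" using hmult[OF r(1) G.m_closed[OF g r(1)]] hmult[OF g r(1)] by simp
    then have "\<rho> \<otimes>\<^bsub>PG\<^esub> (g \<otimes>\<^bsub>PG\<^esub> \<rho>) = g" by (rule hinj[OF G.m_closed[OF r(1) G.m_closed[OF g r(1)]] g])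
    then show ?thesis ..
  qed
qed

lemma hrefl: "g \<in> carrier PG \<Longrightarrow> \<not> rot g \<Longrightarrow> h g = (fst (h g), True)"
  unfolding rot_def by (cases "h g") auto

lemma hrot: "g \<in> carrier PG \<Longrightarrow> rot g \<Longrightarrow> h g = (fst (h g), False)"
  unfolding rot_def by (cases "h g") auto

lemma R2: "j \<in> carrier PG \<Longrightarrow> \<not> rot j \<Longrightarrow> j \<otimes>\<^bsub>PG\<^esub> j = \<one>\<^bsub>PG\<^esub>"
proof -
  assume j: "j \<in> carrier PG" "\<not> rot j"
  have "h (j \<otimes>\<^bsub>PG\<^esub> j) = h j \<otimes>\<^bsub>DG\<^esub> h j" using hmult j by simp
  also have "\<dots> = (fst (h j), True) \<otimes>\<^bsub>DG\<^esub> (fst (h j), True)" using hrefl[OF j] by simp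
  also have "\<dots> = (0, False)" by (rule D5[OF hcar[OF j(1)]])
  also have "\<dots> = h \<one>\<^bsub>PG\<^esub>" using h_one by simp
  finally show ?thesis by (rule hinj[OF G.m_closed[OF j(1) j(1)] G.one_closed])
qed

lemma R3: "s \<in> carrier PG \<Longrightarrow> \<not> rot s \<Longrightarrow> j \<in> carrier PG \<Longrightarrow> \<not> rot j \<Longrightarrow>
   \<exists>k\<in>carrier PG. k \<otimes>\<^bsub>PG\<^esub> s = j \<otimes>\<^bsub>PG\<^esub> k"
proof -
  assume s: "s \<in> carrier PG" "\<not> rot s" and j: "j \<in> carrier PG" "\<not> rot j"
  obtain c where c: "c < n" "(c, False) \<otimes>\<^bsub>DG\<^esub> (fst (h s), True) = (fst (h j), True) \<otimes>\<^bsub>DG\<^esub> (c, False)"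
    using D2[OF oddn hcar[OF s(1)] hcar[OF j(1)]] by blast
  obtain k where k: "k \<in> carrier PG" "h k = (c, False)" using hsurj[OF c(1)] by blast
  have "h (k \<otimes>\<^bsub>PG\<^esub> s) = h k \<otimes>\<^bsub>DG\<^esub> h s" using hmult k s by simp
  also have "\<dots> = (c, False) \<otimes>\<^bsub>DG\<^esub> (fst (h s), True)" using k hrefl[OF s] by simp
  also have "\<dots> = (fst (h j), True) \<otimes>\<^bsub>DG\<^esub> (c, False)" by (rule c(2))
  also have "\<dots> = h j \<otimes>\<^bsub>DG\<^esub> h k" using k hrefl[OF j] by simp
  also have "\<dots> = h (j \<otimes>\<^bsub>PG\<^esub> k)" using hmult k j by simp
  finally have "k \<otimes>\<^bsub>PG\<^esub> s = j \<otimes>\<^bsub>PG\<^esub> k" by (rule hinj[OF G.m_closed[OF k(1) s(1)] G.m_closed[OF j(1) k(1)]])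
  then show ?thesis using k by blast
qed

lemma R4: "j \<in> carrier PG \<Longrightarrow> \<not> rot j \<Longrightarrow> c \<in> carrier PG \<Longrightarrow>
   j \<otimes>\<^bsub>PG\<^esub> c = c \<otimes>\<^bsub>PG\<^esub> j \<Longrightarrow> c = \<one>\<^bsub>PG\<^esub> \<or> c = j"
proof -
  assume j: "j \<in> carrier PG" "\<not> rot j" and c: "c \<in> carrier PG" and e: "j \<otimes>\<^bsub>PG\<^esub> c = c \<otimes>\<^bsub>PG\<^esub> j"
  obtain c1 d1 where hc: "h c = (c1, d1)" by (cases "h c") auto
  have c1: "c1 < n" using hcar[OF c] hc by simp
  have "h c \<otimes>\<^bsub>DG\<^esub> h j = h j \<otimes>\<^bsub>DG\<^esub> h c" using hmult[OF j(1) c] hmult[OF c j(1)] e by simp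
  then have "(c1, d1) \<otimes>\<^bsub>DG\<^esub> (fst (h j), True) = (fst (h j), True) \<otimes>\<^bsub>DG\<^esub> (c1, d1)"
    using hrefl[OF j] hc by simp
  then have "(c1, d1) = (0, False) \<or> (c1, d1) = (fst (h j), True)"
    by (rule D3[OF oddn hcar[OF j(1)] c1])
  then have "h c = h \<one>\<^bsub>PG\<^esub> \<or> h c = h j" using h_one hrefl[OF j] hc by simp
  then show ?thesis using hinj[OF c G.one_closed] hinj[OF c j(1)] by blast
qed

lemma R5: "\<rho> \<in> carrier PG \<Longrightarrow> rot \<rho> \<Longrightarrow> \<exists>c\<in>carrier PG. \<rho> = c \<otimes>\<^bsub>PG\<^esub> c"
proof -
  assume r: "\<rho> \<in> carrier PG" "rot \<rho>"
  obtain c where c: "c < n" "(c, False) \<otimes>\<^bsub>DG\<^esub> (c, False) = (fst (h \<rho>), False)"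
    using D4[OF oddn hcar[OF r(1)]] by blast
  obtain k where k: "k \<in> carrier PG" "h k = (c, False)" using hsurj[OF c(1)] by blast
  have "h (k \<otimes>\<^bsub>PG\<^esub> k) = h k \<otimes>\<^bsub>DG\<^esub> h k" using hmult k by simp
  also have "\<dots> = h \<rho>" using k c(2) hrot[OF r] by simp
  finally have "k \<otimes>\<^bsub>PG\<^esub> k = \<rho>" by (rule hinj[OF G.m_closed[OF k(1) k(1)] r(1)])
  then show ?thesis using k by blast
qed

lemma card_rot: "card {g \<in> carrier PG. rot g} = n"
proof -
  have inj0: "inj_on h (carrier PG)" using hbij unfolding bij_betw_def by blast
  have inj: "inj_on h {g \<in> carrier PG. rot g}" by (rule inj_on_subset[OF inj0]) blast
  have img: "h ` {g \<in> carrier PG. rot g} = {0..<n} \<times> {False}"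
  proof
    show "h ` {g \<in> carrier PG. rot g} \<subseteq> {0..<n} \<times> {False}"
    proof
      fix p assume "p \<in> h ` {g \<in> carrier PG. rot g}"
      then obtain g where g: "g \<in> carrier PG" "rot g" "p = h g" by auto
      have "h g = (fst (h g), False)" using hrot[OF g(1,2)] .
      then show "p \<in> {0..<n} \<times> {False}" using hcar[OF g(1)] g(3) by (metis SigmaI atLeastLessThan_iff singletonI zero_le)
    qed
    show "{0..<n} \<times> {False} \<subseteq> h ` {g \<in> carrier PG. rot g}"
    proof
      fix p assume "p \<in> {0..<n} \<times> ({False}::bool set)"
      then obtain a where a: "a < n" "p = (a, False)" by auto
      obtain g where g: "g \<in> carrier PG" "h g = (a, False)" using hsurj[OF a(1)] by blast
      have "rot g" using g unfolding rot_def by simp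
      then have "g \<in> {g \<in> carrier PG. rot g}" using g by simp
      then show "p \<in> h ` {g \<in> carrier PG. rot g}" using g a by (metis image_eqI)
    qed
  qed
  have "card {g \<in> carrier PG. rot g} = card (h ` {g \<in> carrier PG. rot g})" using card_image[OF inj] by simp
  also have "\<dots> = n" unfolding img by simp
  finally show ?thesis .
qed


lemma cancel_eq: "a \<in> carrier PG \<Longrightarrow> b \<in> carrier PG \<Longrightarrow> inv\<^bsub>PG\<^esub> a \<otimes>\<^bsub>PG\<^esub> b = \<one>\<^bsub>PG\<^esub> \<Longrightarrow> b = a"
proof -
  assume a: "a \<in> carrier PG" and b: "b \<in> carrier PG" and e: "inv\<^bsub>PG\<^esub> a \<otimes>\<^bsub>PG\<^esub> b = \<one>\<^bsub>PG\<^esub>"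
  have "b = a \<otimes>\<^bsub>PG\<^esub> (inv\<^bsub>PG\<^esub> a \<otimes>\<^bsub>PG\<^esub> b)" using a b by (simp add: G.m_assoc[symmetric])
  also have "\<dots> = a" using e a by simp
  finally show ?thesis .
qed

lemma rot_fix: "\<rho> \<in> carrier PG \<Longrightarrow> rot \<rho> \<Longrightarrow> x0 \<in> A \<Longrightarrow> \<rho> x0 = x0 \<Longrightarrow> \<rho> = \<one>\<^bsub>PG\<^esub>"
proof -
  assume r: "\<rho> \<in> carrier PG" "rot \<rho>" and x0: "x0 \<in> A" and f: "\<rho> x0 = x0"
  have "\<rho> y = y" if y: "y \<in> A" for y
  proof -
    obtain k where k: "k \<in> carrier PG" "k x0 = y" using trans[OF x0 y] by blast
    from R1[OF r k(1)] show ?thesis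
    proof
      assume e: "\<rho> \<otimes>\<^bsub>PG\<^esub> k = k \<otimes>\<^bsub>PG\<^esub> \<rho>"
      have "\<rho> y = (\<rho> \<otimes>\<^bsub>PG\<^esub> k) x0" using PG_mult_app[OF r(1) k(1) x0] k by simp
      also have "\<dots> = (k \<otimes>\<^bsub>PG\<^esub> \<rho>) x0" using e by simp
      also have "\<dots> = y" using PG_mult_app[OF k(1) r(1) x0] f k by simp
      finally show ?thesis .
    next
      assume e: "\<rho> \<otimes>\<^bsub>PG\<^esub> (k \<otimes>\<^bsub>PG\<^esub> \<rho>) = k"
      have "(\<rho> \<otimes>\<^bsub>PG\<^esub> (k \<otimes>\<^bsub>PG\<^esub> \<rho>)) x0 = \<rho> (k (\<rho> x0))"
        using PG_mult_app[OF r(1) G.m_closed[OF k(1) r(1)] x0] PG_mult_app[OF k(1) r(1) x0] by simp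
      then show ?thesis using e f k by simp
    qed
  qed
  then show ?thesis using PG_ext[OF r(1) G.one_closed] PG_one_app by simp
qed

lemma carrier_sub2: "j \<in> carrier PG \<Longrightarrow> j \<otimes>\<^bsub>PG\<^esub> j = \<one>\<^bsub>PG\<^esub> \<Longrightarrow>
   (\<And>y. y \<in> A \<Longrightarrow> tau y = \<one>\<^bsub>PG\<^esub> \<or> tau y = j) \<Longrightarrow> carrier PG \<subseteq> {\<one>\<^bsub>PG\<^esub>, j}"
proof
  fix g
  assume j: "j \<in> carrier PG" and jj: "j \<otimes>\<^bsub>PG\<^esub> j = \<one>\<^bsub>PG\<^esub>"
    and ty: "\<And>y. y \<in> A \<Longrightarrow> tau y = \<one>\<^bsub>PG\<^esub> \<or> tau y = j" and g: "g \<in> carrier PG"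
  have ij: "inv\<^bsub>PG\<^esub> j = j" using G.inv_equality[OF jj j j] .
  have sy: "sig y = \<one>\<^bsub>PG\<^esub> \<or> sig y = j" if y: "y \<in> A" for y
  proof -
    have e: "sig y = inv\<^bsub>PG\<^esub> (tau y)" using G.inv_inv[OF sig_in[OF y]] by simp
    from ty[OF y] show ?thesis
    proof
      assume "tau y = \<one>\<^bsub>PG\<^esub>" then show ?thesis using e by simp
    next
      assume "tau y = j" then show ?thesis using e ij by simp
    qed
  qed
  have "g \<in> generate (BijGroup A) (sig ` A)" using g carrier_PG by simp
  then show "g \<in> {\<one>\<^bsub>PG\<^esub>, j}"
  proof (induction rule: generate.induct)
    case one then show ?case using PG_one_eq by simp
  next
    case (incl h) then show ?case using sy by auto
  next
    case (inv h)
    then obtain y where y: "y \<in> A" "h = sig y" by auto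
    have "inv\<^bsub>BijGroup A\<^esub> h = inv\<^bsub>PG\<^esub> h" using PG_inv_eq y sig_in by simp
    then show ?case using ty y by auto
  next
    case (eng h1 h2)
    then show ?case using PG_mult_eq jj j by auto
  qed
qed

lemma no_fix: "g \<in> carrier PG \<Longrightarrow> x0 \<in> A \<Longrightarrow> g x0 = x0 \<Longrightarrow> g = \<one>\<^bsub>PG\<^esub>"
proof (rule ccontr)
  assume s: "g \<in> carrier PG" and x0: "x0 \<in> A" and f: "g x0 = x0" and ne: "g \<noteq> \<one>\<^bsub>PG\<^esub>"
  have ns: "\<not> rot g" using rot_fix s x0 f ne by blast
  let ?R = "{g \<in> carrier PG. rot g}"
  have bij: "bij_betw (\<lambda>r. r x0) ?R A"
  proof (rule bij_betwI')
    fix r1 r2 assume r1: "r1 \<in> ?R" and r2: "r2 \<in> ?R"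
    show "(r1 x0 = r2 x0) = (r1 = r2)"
    proof
      assume e: "r1 x0 = r2 x0"
      have c1: "r1 \<in> carrier PG" "rot r1" and c2: "r2 \<in> carrier PG" "rot r2" using r1 r2 by auto
      have "(inv\<^bsub>PG\<^esub> r2 \<otimes>\<^bsub>PG\<^esub> r1) x0 = x0"
        using PG_mult_app[OF G.inv_closed[OF c2(1)] c1(1) x0] e inv_app1[OF c2(1) x0] by simp
      moreover have "rot (inv\<^bsub>PG\<^esub> r2 \<otimes>\<^bsub>PG\<^esub> r1)" using rot_mult rot_inv c1 c2 by simp
      ultimately have "inv\<^bsub>PG\<^esub> r2 \<otimes>\<^bsub>PG\<^esub> r1 = \<one>\<^bsub>PG\<^esub>"
        using rot_fix[OF G.m_closed[OF G.inv_closed[OF c2(1)] c1(1)] _ x0] by blast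
      then show "r1 = r2" using cancel_eq c1 c2 by blast
    qed simp
  next
    fix r assume "r \<in> ?R" then show "r x0 \<in> A" using PG_app_closed x0 by simp
  next
    fix y assume y: "y \<in> A"
    obtain k where k: "k \<in> carrier PG" "k x0 = y" using trans[OF x0 y] by blast
    show "\<exists>r\<in>?R. y = r x0"
    proof (cases "rot k")
      case True then show ?thesis using k by auto
    next
      case False
      have "rot (k \<otimes>\<^bsub>PG\<^esub> g)" using rot_mult k s False ns by simp
      moreover have "(k \<otimes>\<^bsub>PG\<^esub> g) x0 = y" using PG_mult_app[OF k(1) s x0] f k by simp
      ultimately show ?thesis using G.m_closed[OF k(1) s] by force
    qed
  qed
  have cA: "card A = n" using bij_betw_same_card[OF bij] card_rot by simp
  have pj: "pp jj" using pp_jj cA oddn by simp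
  have nj: "\<not> rot jj"
  proof
    assume "rot jj"
    then obtain c where c: "c \<in> carrier PG" "jj = c \<otimes>\<^bsub>PG\<^esub> c" using R5 jj_in by blast
    then show False using pj pp_mult[OF c(1) c(1)] by simp
  qed
  obtain k where k: "k \<in> carrier PG" "k \<otimes>\<^bsub>PG\<^esub> g = jj \<otimes>\<^bsub>PG\<^esub> k" using R3[OF s ns jj_in nj] by blast
  define z0 where "z0 = k x0"
  have z0: "z0 \<in> A" using PG_app_closed k x0 z0_def by simp
  have jz: "jj z0 = z0"
  proof -
    have "jj z0 = (jj \<otimes>\<^bsub>PG\<^esub> k) x0" using PG_mult_app[OF jj_in k(1) x0] z0_def by simp
    also have "\<dots> = (k \<otimes>\<^bsub>PG\<^esub> g) x0" using k by simp
    also have "\<dots> = z0" using PG_mult_app[OF k(1) s x0] f z0_def by simp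
    finally show ?thesis .
  qed
  have ijz: "(inv\<^bsub>PG\<^esub> jj) z0 = z0" using inv_app1[OF jj_in z0] jz by simp
  have "lam (inv\<^bsub>PG\<^esub> jj) (tau z0) = tau z0" using lam_tau[OF G.inv_closed[OF jj_in] z0] ijz by simp
  then have e: "inv\<^bsub>PG\<^esub> jj \<otimes>\<^bsub>PG\<^esub> tau z0 \<otimes>\<^bsub>PG\<^esub> jj = tau z0" using lam_inv_jj[OF tau_in[OF z0]] by simp
  have comm: "jj \<otimes>\<^bsub>PG\<^esub> tau z0 = tau z0 \<otimes>\<^bsub>PG\<^esub> jj"
  proof -
    have "tau z0 \<otimes>\<^bsub>PG\<^esub> jj = jj \<otimes>\<^bsub>PG\<^esub> (inv\<^bsub>PG\<^esub> jj \<otimes>\<^bsub>PG\<^esub> tau z0 \<otimes>\<^bsub>PG\<^esub> jj)"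
      using jj_in tau_in[OF z0] by (simp add: G.m_assoc[symmetric])
    then show ?thesis using e by simp
  qed
  have t0: "tau z0 = \<one>\<^bsub>PG\<^esub> \<or> tau z0 = jj" using R4[OF jj_in nj tau_in[OF z0] comm] .
  have ty: "tau y = \<one>\<^bsub>PG\<^esub> \<or> tau y = jj" if y: "y \<in> A" for y
  proof -
    obtain k' where k': "k' \<in> carrier PG" "k' z0 = y" using trans[OF z0 y] by blast
    have "tau y = lam k' (tau z0)" using lam_tau[OF k'(1) z0] k' by simp
    then show ?thesis using t0 lam_one[OF k'(1)] lam_jj[OF k'(1)] by auto
  qed
  have sub: "carrier PG \<subseteq> {\<one>\<^bsub>PG\<^esub>, jj}" using carrier_sub2[OF jj_in R2[OF jj_in nj] ty] by blast
  have "card (carrier PG) \<le> card {\<one>\<^bsub>PG\<^esub>, jj}" using card_mono[OF _ sub] by simp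
  also have "\<dots> \<le> 2" by (simp add: card_insert_le_m1)
  finally show False using cardG n3 by simp
qed


lemma A_ne: "A \<noteq> {}"
proof
  assume A0: "A = {}"
  have "g \<in> {\<one>\<^bsub>PG\<^esub>}" if g: "g \<in> carrier PG" for g
  proof -
    have "g \<in> generate (BijGroup A) (sig ` A)" using g carrier_PG by simp
    then show ?thesis
    proof (induction rule: generate.induct)
      case one then show ?case using PG_one_eq by simp
    next
      case (incl h) then show ?case using A0 by simp
    next
      case (inv h) then show ?case using A0 by simp
    next
      case (eng h1 h2) then show ?case using PG_mult_eq by simp
    qed
  qed
  then have "carrier PG \<subseteq> {\<one>\<^bsub>PG\<^esub>}" by blast
  then have "card (carrier PG) \<le> 1" using card_mono[of "{\<one>\<^bsub>PG\<^esub>}"] by fastforce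
  then show False using cardG n3 by simp
qed

lemma card_A: "card A = 2 * n"
proof -
  obtain a0 where a0: "a0 \<in> A" using A_ne by blast
  have "bij_betw (\<lambda>g. g a0) (carrier PG) A"
  proof (rule bij_betwI')
    fix g k assume g: "g \<in> carrier PG" and k: "k \<in> carrier PG"
    show "(g a0 = k a0) = (g = k)"
    proof
      assume e: "g a0 = k a0"
      have "(inv\<^bsub>PG\<^esub> k \<otimes>\<^bsub>PG\<^esub> g) a0 = a0"
        using PG_mult_app[OF G.inv_closed[OF k] g a0] e inv_app1[OF k a0] by simp
      then have "inv\<^bsub>PG\<^esub> k \<otimes>\<^bsub>PG\<^esub> g = \<one>\<^bsub>PG\<^esub>"
        using no_fix[OF G.m_closed[OF G.inv_closed[OF k] g] a0] by blast
      then show "g = k" using cancel_eq k g by blast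
    qed simp
  next
    fix g assume "g \<in> carrier PG" then show "g a0 \<in> A" using PG_app_closed a0 by simp
  next
    fix y assume y: "y \<in> A"
    then show "\<exists>g\<in>carrier PG. y = g a0" using trans[OF a0 y] by metis
  qed
  then show ?thesis using bij_betw_same_card cardG by metis
qed


end


theorem theorem2:
  fixes A :: "'a set" and mu :: "'a \<Rightarrow> 'a \<Rightarrow> 'a" and n :: nat
  assumes "n \<ge> 3" and "odd n"
    and "cycle_set A mu"
    and "indecomposable A mu"
    and "perm_group A mu \<cong> dihedral_group n"
  shows "card A = 2 * n"
proof -
  obtain h where h: "h \<in> iso (perm_group A mu) (dihedral_group n)"
    using assms(5) unfolding is_iso_def by blast
  have bij: "bij_betw h (carrier (perm_group A mu)) ({0..<n} \<times> UNIV)"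
    using h by (simp add: iso_def dcarrier)
  have finG: "finite (carrier (perm_group A mu))" using bij_betw_finite[OF bij] by simp
  have cardG: "card (carrier (perm_group A mu)) = 2 * n"
    using bij_betw_same_card[OF bij] by (simp add: card_cartesian_product)
  have trans: "\<And>x y. x \<in> A \<Longrightarrow> y \<in> A \<Longrightarrow> \<exists>g\<in>carrier (perm_group A mu). g x = y"
    using assms(4) unfolding indecomposable_def by blast
  have finA: "finite A"
  proof (cases "A = {}")
    case False
    then obtain a0 where a0: "a0 \<in> A" by blast
    have "A \<subseteq> (\<lambda>g. g a0) ` carrier (perm_group A mu)"
    proof
      fix y assume "y \<in> A"
      then obtain g where "g \<in> carrier (perm_group A mu)" "g a0 = y" using trans[OF a0] by blast
      then show "y \<in> (\<lambda>g. g a0) ` carrier (perm_group A mu)" by blast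
    qed
    then show ?thesis using finite_subset finG by blast
  qed simp
  interpret E: cyce A mu n h
  proof (unfold_locales)
    show "cycle_set A mu" by (rule assms(3))
    show "finite (carrier (perm_group A mu))" by (rule finG)
    show "finite A" by (rule finA)
    show "card (carrier (perm_group A mu)) = 2 * n" by (rule cardG)
    show "odd n" by (rule assms(2))
    show "\<And>x y. x \<in> A \<Longrightarrow> y \<in> A \<Longrightarrow> \<exists>g\<in>carrier (perm_group A mu). g x = y" by (rule trans)
    show "h \<in> iso (perm_group A mu) (dihedral_group n)" by (rule h)
    show "3 \<le> n" by (rule assms(1))
  qed
  show ?thesis by (rule E.card_A)
qed

end
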